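(* Let $L$ be a Hausdorff co-Heyting algebra and $I$ an ideal of $L$. The quotient co-Heyting algebra $L/I$ is Hausdorff if and only if $I$ is closed in the codimetric topology of $L$. In particular, the quotient of a Hausdorff co-Heyting algebra by a principal ideal is Hausdorff.
   Context: A co-Heyting algebra is a bounded distributive lattice $(L,0,1,\vee,\wedge)$ such that $a-b=\min\{c\in L: a\le b\vee c\}$ exists for all $a,b$. Let $a\triangle b=(a-b)\vee(b-a)$; for an ideal $I$, $L/I$ is the quotient by the congruence $a\equiv_I b\iff a\triangle b\in I$, itself a co-Heyting algebra. $\operatorname{Spec}L$ is the set of prime filters ordered by inclusion; the height of a prime filter is its foundation rank there; $\operatorname{codim}_L a=\min\{\operatorname{height}\mathfrak p: a\in\mathfrak p\in\operatorname{Spec}L\}$ ($+\infty$ if none). The codimetric pseudometric is $\operatorname{dist}_L(a,b)=2^{-\operatorname{codim}_L(a\triangle b)}$ if $\operatorname{codim}_L(a\triangle b)$ is finite and $0$ otherwise; the codimetric topology is the topology it defines. $L$ is called Hausdorff if its codimetric topology is Hausdorff, equivalently if every nonzero element of $L$ has finite codimension. *)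

theory Defs
  imports Main "HOL-Library.Extended_Nat"
begin

class coheyting = bounded_lattice + distrib_lattice + minus +
  assumes le_sup_diff: "a \<le> sup b (a - b)"
  and diff_least: "a \<le> sup b c \<Longrightarrow> a - b \<le> c"

text \<open>Carrier-based co-Heyting algebra structures (needed for quotients).\<close>

record 'a cha =
  ch_car :: "'a set"
  ch_join :: "'a \<Rightarrow> 'a \<Rightarrow> 'a"
  ch_meet :: "'a \<Rightarrow> 'a \<Rightarrow> 'a"
  ch_zero :: 'a
  ch_one :: 'a
  ch_diff :: "'a \<Rightarrow> 'a \<Rightarrow> 'a"

definition ch_le :: "'a cha \<Rightarrow> 'a \<Rightarrow> 'a \<Rightarrow> bool" where
  "ch_le S a b \<longleftrightarrow> ch_join S a b = b"

definition ch_symdiff :: "'a cha \<Rightarrow> 'a \<Rightarrow> 'a \<Rightarrow> 'a" where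
  "ch_symdiff S a b = ch_join S (ch_diff S a b) (ch_diff S b a)"

definition prime_filter :: "'a cha \<Rightarrow> 'a set \<Rightarrow> bool" where
  "prime_filter S p \<longleftrightarrow> p \<subseteq> ch_car S \<and> ch_one S \<in> p \<and> ch_zero S \<notin> p
     \<and> (\<forall>a\<in>p. \<forall>b\<in>ch_car S. ch_le S a b \<longrightarrow> b \<in> p)
     \<and> (\<forall>a\<in>p. \<forall>b\<in>p. ch_meet S a b \<in> p)
     \<and> (\<forall>a\<in>ch_car S. \<forall>b\<in>ch_car S. ch_join S a b \<in> p \<longrightarrow> a \<in> p \<or> b \<in> p)"

definition Spec :: "'a cha \<Rightarrow> 'a set set" where
  "Spec S = {p. prime_filter S p}"

text \<open>height_le S p n: the foundation rank of p in (Spec S, \<subseteq>) is at most n.\<close>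

fun height_le :: "'a cha \<Rightarrow> 'a set \<Rightarrow> nat \<Rightarrow> bool" where
  "height_le S p 0 = (\<forall>q\<in>Spec S. \<not> q \<subset> p)"
| "height_le S p (Suc n) = (\<forall>q\<in>Spec S. q \<subset> p \<longrightarrow> height_le S q n)"

definition height :: "'a cha \<Rightarrow> 'a set \<Rightarrow> enat" where
  "height S p = (if \<exists>n. height_le S p n then enat (LEAST n. height_le S p n) else \<infinity>)"

definition codim :: "'a cha \<Rightarrow> 'a \<Rightarrow> enat" where
  "codim S a = (INF p\<in>{p\<in>Spec S. a \<in> p}. height S p)"

definition cdist :: "'a cha \<Rightarrow> 'a \<Rightarrow> 'a \<Rightarrow> real" where
  "cdist S a b = (case codim S (ch_symdiff S a b) of enat n \<Rightarrow> (1/2) ^ n | \<infinity> \<Rightarrow> 0)"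

definition codim_open :: "'a cha \<Rightarrow> 'a set \<Rightarrow> bool" where
  "codim_open S U \<longleftrightarrow> U \<subseteq> ch_car S \<and>
     (\<forall>x\<in>U. \<exists>e>0. \<forall>y\<in>ch_car S. cdist S x y < e \<longrightarrow> y \<in> U)"

definition codim_closed :: "'a cha \<Rightarrow> 'a set \<Rightarrow> bool" where
  "codim_closed S A \<longleftrightarrow> A \<subseteq> ch_car S \<and> codim_open S (ch_car S - A)"

definition codim_Hausdorff :: "'a cha \<Rightarrow> bool" where
  "codim_Hausdorff S \<longleftrightarrow> (\<forall>x\<in>ch_car S. \<forall>y\<in>ch_car S. x \<noteq> y \<longrightarrow>
     (\<exists>U V. codim_open S U \<and> codim_open S V \<and> x \<in> U \<and> y \<in> V \<and> U \<inter> V = {}))"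

definition full_cha :: "'a::coheyting cha" where
  "full_cha = \<lparr>ch_car = UNIV, ch_join = sup, ch_meet = inf, ch_zero = bot, ch_one = top,
               ch_diff = (-)\<rparr>"

definition cha_ideal :: "'a::coheyting set \<Rightarrow> bool" where
  "cha_ideal I \<longleftrightarrow> bot \<in> I \<and> (\<forall>a\<in>I. \<forall>b. b \<le> a \<longrightarrow> b \<in> I) \<and> (\<forall>a\<in>I. \<forall>b\<in>I. sup a b \<in> I)"

definition symdiff :: "'a::coheyting \<Rightarrow> 'a \<Rightarrow> 'a" where
  "symdiff a b = sup (a - b) (b - a)"

definition qclass :: "'a::coheyting set \<Rightarrow> 'a \<Rightarrow> 'a set" where
  "qclass I a = {b. symdiff a b \<in> I}"

text \<open>L/I: classes of the congruence, with operations computed on representatives.\<close>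

definition quot_cha :: "'a::coheyting set \<Rightarrow> 'a set cha" where
  "quot_cha I = \<lparr>ch_car = range (qclass I),
     ch_join = (\<lambda>X Y. qclass I (sup (SOME a. a \<in> X) (SOME b. b \<in> Y))),
     ch_meet = (\<lambda>X Y. qclass I (inf (SOME a. a \<in> X) (SOME b. b \<in> Y))),
     ch_zero = qclass I bot, ch_one = qclass I top,
     ch_diff = (\<lambda>X Y. qclass I ((SOME a. a \<in> X) - (SOME b. b \<in> Y)))\<rparr>"

end

theory Submission imports Defs begin
unbundle lattice_syntax


lemma diff_le_iff: "(a::'a::coheyting) - b \<le> c \<longleftrightarrow> a \<le> b \<squnion> c"
proof
  assume "a - b \<le> c"
  hence "b \<squnion> (a - b) \<le> b \<squnion> c" by (rule sup_mono[OF order_refl])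
  thus "a \<le> b \<squnion> c" using le_sup_diff[of a b] by (rule order_trans[rotated])
next
  assume "a \<le> b \<squnion> c" thus "a - b \<le> c" by (rule diff_least)
qed

lemma le_sd: "(a::'a::coheyting) \<le> b \<squnion> (a - b)" by (rule le_sup_diff)

lemma diff_mono1: "(x::'a::coheyting) \<le> y \<Longrightarrow> x - b \<le> y - b"
  unfolding diff_le_iff using le_sd[of y b] by (meson order_trans)

lemma diff_anti2: "(b::'a::coheyting) \<le> b' \<Longrightarrow> a - b' \<le> a - b"
proof -
  assume "b \<le> b'"
  hence "b \<squnion> (a - b) \<le> b' \<squnion> (a - b)" by (rule sup_mono[OF _ order_refl])
  thus ?thesis unfolding diff_le_iff using le_sd[of a b] by (rule order_trans[rotated])
qed

lemma diff_bot[simp]: "(a::'a::coheyting) - bot = a"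
  by (rule antisym) (simp_all add: diff_le_iff, metis le_sd sup_bot_left)

lemma bot_diff[simp]: "bot - (a::'a::coheyting) = bot"
  by (rule antisym) (simp_all add: diff_le_iff)

lemma diff_self[simp]: "(a::'a::coheyting) - a = bot"
  by (rule antisym) (simp_all add: diff_le_iff)

lemma diff_le: "(a::'a::coheyting) - b \<le> a"
  by (simp add: diff_le_iff)

lemma diff_sup_le: "((x::'a::coheyting) \<squnion> y) - (b1 \<squnion> b2) \<le> (x - b1) \<squnion> (y - b2)"
proof -
  have "x \<squnion> y \<le> (b1 \<squnion> (x - b1)) \<squnion> (b2 \<squnion> (y - b2))" by (rule sup_mono; rule le_sd)
  also have "\<dots> = (b1 \<squnion> b2) \<squnion> ((x - b1) \<squnion> (y - b2))" by (simp add: ac_simps)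
  finally show ?thesis by (simp add: diff_le_iff)
qed

lemma diff_inf_le: "((x::'a::coheyting) \<sqinter> y) - (x' \<sqinter> y') \<le> (x - x') \<squnion> (y - y')"
proof -
  let ?D = "(x - x') \<squnion> (y - y')"
  have "x \<le> x' \<squnion> (x - x')" by (rule le_sd)
  also have "\<dots> \<le> x' \<squnion> ?D" by (rule sup_mono[OF order_refl sup_ge1])
  finally have 1: "x \<le> x' \<squnion> ?D" .
  have "y \<le> y' \<squnion> (y - y')" by (rule le_sd)
  also have "\<dots> \<le> y' \<squnion> ?D" by (rule sup_mono[OF order_refl sup_ge2])
  finally have 2: "y \<le> y' \<squnion> ?D" .
  have "x \<sqinter> y \<le> (x' \<squnion> ?D) \<sqinter> (y' \<squnion> ?D)" using 1 2 by (rule inf_mono)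
  also have "\<dots> = (x' \<sqinter> y') \<squnion> ?D" by (simp add: sup_inf_distrib2)
  finally show ?thesis by (simp add: diff_le_iff)
qed

lemma diff_diff_le: "((x::'a::coheyting) - y) - (x' - y') \<le> (x - x') \<squnion> (y' - y)"
proof -
  have "x \<le> x' \<squnion> (x - x')" by (rule le_sd)
  also have "\<dots> \<le> (y' \<squnion> (x' - y')) \<squnion> (x - x')" by (rule sup_mono[OF le_sd order_refl])
  also have "\<dots> \<le> ((y \<squnion> (y' - y)) \<squnion> (x' - y')) \<squnion> (x - x')"
    by (rule sup_mono[OF sup_mono[OF le_sd order_refl] order_refl])
  also have "\<dots> = y \<squnion> ((x' - y') \<squnion> ((x - x') \<squnion> (y' - y)))" by (simp add: ac_simps)
  finally have "x - y \<le> (x' - y') \<squnion> ((x - x') \<squnion> (y' - y))" by (simp add: diff_le_iff)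
  thus ?thesis by (simp add: diff_le_iff)
qed

lemma diff_trans_le: "(a::'a::coheyting) - c \<le> (a - b) \<squnion> (b - c)"
proof -
  have "a \<le> b \<squnion> (a - b)" by (rule le_sd)
  also have "\<dots> \<le> (c \<squnion> (b - c)) \<squnion> (a - b)" by (rule sup_mono[OF le_sd order_refl])
  also have "\<dots> = c \<squnion> ((a - b) \<squnion> (b - c))" by (simp add: ac_simps)
  finally show ?thesis by (simp add: diff_le_iff)
qed

lemma sup_le_sup2: "(a::'a::lattice) \<le> c \<Longrightarrow> b \<le> d \<Longrightarrow> a \<squnion> b \<le> c \<squnion> d" by (rule sup_mono)

lemma symdiff_comm: "symdiff x y = symdiff y x"
  by (simp add: symdiff_def sup_commute)

lemma symdiff_self[simp]: "symdiff x x = bot"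
  by (simp add: symdiff_def)

lemma symdiff_bot[simp]: "symdiff x bot = x"
  by (simp add: symdiff_def)

lemma symdiff_trans: "symdiff (x::'a::coheyting) z \<le> symdiff x y \<squnion> symdiff y z"
proof -
  have "symdiff x z \<le> ((x - y) \<squnion> (y - z)) \<squnion> ((z - y) \<squnion> (y - x))"
    unfolding symdiff_def by (rule sup_mono; rule diff_trans_le)
  also have "\<dots> = symdiff x y \<squnion> symdiff y z" by (simp add: symdiff_def ac_simps)
  finally show ?thesis .
qed

lemma symdiff_sup: "symdiff ((x::'a::coheyting) \<squnion> y) (x' \<squnion> y') \<le> symdiff x x' \<squnion> symdiff y y'"
proof -
  have "symdiff (x \<squnion> y) (x' \<squnion> y') \<le> ((x - x') \<squnion> (y - y')) \<squnion> ((x' - x) \<squnion> (y' - y))"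
    unfolding symdiff_def by (rule sup_mono; rule diff_sup_le)
  also have "\<dots> = symdiff x x' \<squnion> symdiff y y'" by (simp add: symdiff_def ac_simps)
  finally show ?thesis .
qed

lemma symdiff_inf: "symdiff ((x::'a::coheyting) \<sqinter> y) (x' \<sqinter> y') \<le> symdiff x x' \<squnion> symdiff y y'"
proof -
  have "symdiff (x \<sqinter> y) (x' \<sqinter> y') \<le> ((x - x') \<squnion> (y - y')) \<squnion> ((x' - x) \<squnion> (y' - y))"
    unfolding symdiff_def by (rule sup_mono; rule diff_inf_le)
  also have "\<dots> = symdiff x x' \<squnion> symdiff y y'" by (simp add: symdiff_def ac_simps)
  finally show ?thesis .
qed

lemma symdiff_diff: "symdiff ((x::'a::coheyting) - y) (x' - y') \<le> symdiff x x' \<squnion> symdiff y y'"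
proof -
  have "symdiff (x - y) (x' - y') \<le> ((x - x') \<squnion> (y' - y)) \<squnion> ((x' - x) \<squnion> (y - y'))"
    unfolding symdiff_def by (rule sup_mono; rule diff_diff_le)
  also have "\<dots> = symdiff x x' \<squnion> symdiff y y'" by (simp add: symdiff_def ac_simps)
  finally show ?thesis .
qed




definition pf :: "'a::coheyting set \<Rightarrow> bool" where
  "pf P \<longleftrightarrow> top \<in> P \<and> bot \<notin> P \<and> (\<forall>a\<in>P. \<forall>b. a \<le> b \<longrightarrow> b \<in> P)
     \<and> (\<forall>a\<in>P. \<forall>b\<in>P. a \<sqinter> b \<in> P) \<and> (\<forall>a b. a \<squnion> b \<in> P \<longrightarrow> a \<in> P \<or> b \<in> P)"

lemma pf_up: "pf P \<Longrightarrow> a \<in> P \<Longrightarrow> a \<le> b \<Longrightarrow> b \<in> P" by (auto simp: pf_def)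
lemma pf_inf: "pf P \<Longrightarrow> a \<in> P \<Longrightarrow> b \<in> P \<Longrightarrow> a \<sqinter> b \<in> P" by (auto simp: pf_def)
lemma pf_sup: "pf P \<Longrightarrow> a \<squnion> b \<in> P \<Longrightarrow> a \<in> P \<or> b \<in> P" by (auto simp: pf_def)
lemma pf_bot: "pf P \<Longrightarrow> bot \<notin> P" by (auto simp: pf_def)
lemma pf_top: "pf P \<Longrightarrow> top \<in> P" by (auto simp: pf_def)

lemma pf_diff: "pf P \<Longrightarrow> a \<in> P \<Longrightarrow> b \<notin> P \<Longrightarrow> a - b \<in> P"
  by (metis le_sd pf_sup pf_up)

lemma prime_filter_full: "prime_filter (full_cha :: 'a::coheyting cha) P \<longleftrightarrow> pf P"
  by (simp add: prime_filter_def full_cha_def ch_le_def pf_def le_iff_sup)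

lemma Spec_full: "Spec (full_cha :: 'a::coheyting cha) = {P. pf P}"
  by (simp add: Spec_def prime_filter_full)

fun hl :: "'x set set \<Rightarrow> 'x set \<Rightarrow> nat \<Rightarrow> bool" where
  "hl A p 0 = (\<forall>q\<in>A. \<not> q \<subset> p)"
| "hl A p (Suc n) = (\<forall>q\<in>A. q \<subset> p \<longrightarrow> hl A q n)"

lemma height_le_hl: "height_le S p n = hl (Spec S) p n"
  by (induction n arbitrary: p) auto

lemma hl_Suc: "hl A p n \<Longrightarrow> hl A p (Suc n)"
  by (induction n arbitrary: p) auto

lemma hl_mono: assumes "hl A p n" "n \<le> m" shows "hl A p m"
  using assms(2) by (induction m rule: dec_induct) (use assms(1) hl_Suc in blast)+

lemma hl_sub: "hl A p n \<Longrightarrow> q \<in> A \<Longrightarrow> q \<subseteq> p \<Longrightarrow> hl A q n"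
proof (cases "q = p")
  case False
  assume "hl A p n" "q \<in> A" "q \<subseteq> p"
  with False show ?thesis by (cases n) (auto intro: hl_Suc)
qed simp

lemma hl_iso:
  assumes "\<forall>P\<in>A. \<forall>P'\<in>A. g P \<subseteq> g P' \<longleftrightarrow> P \<subseteq> P'" "P \<in> A"
  shows "hl (g ` A) (g P) n \<longleftrightarrow> hl A P n"
  using assms(2)
proof (induction n arbitrary: P)
  have ps: "P \<in> A \<Longrightarrow> P' \<in> A \<Longrightarrow> g P \<subset> g P' \<longleftrightarrow> P \<subset> P'" for P P'
    using assms(1) by (auto simp: psubset_eq)
  {
  case 0 thus ?case using ps by auto
  next
  case (Suc n) thus ?case using ps by auto
  }
qed

lemma hl_down:
  assumes "A' \<subseteq> A" "\<forall>q\<in>A. \<forall>p\<in>A'. q \<subseteq> p \<longrightarrow> q \<in> A'" "p \<in> A'"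
  shows "hl A' p n \<longleftrightarrow> hl A p n"
  using assms(3)
proof (induction n arbitrary: p)
  case 0 thus ?case using assms(1,2) by (auto simp: psubset_eq) 
next
  case (Suc n) thus ?case using assms(1,2) by (auto simp: psubset_eq) 
qed

lemma height_le_iff: "height S p \<le> enat N \<longleftrightarrow> height_le S p N"
proof
  assume h: "height S p \<le> enat N"
  then have ex: "\<exists>n. height_le S p n" by (auto simp: height_def split: if_splits)
  with h have "(LEAST n. height_le S p n) \<le> N" by (simp add: height_def)
  moreover have "height_le S p (LEAST n. height_le S p n)" using ex by (rule LeastI_ex)
  ultimately show "height_le S p N" by (simp add: height_le_hl hl_mono)
next
  assume "height_le S p N"
  then show "height S p \<le> enat N" by (auto simp: height_def intro: Least_le)
qed

lemma codim_le_iff: "codim S a \<le> enat N \<longleftrightarrow> (\<exists>p\<in>Spec S. a \<in> p \<and> height_le S p N)"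
proof
  assume h: "codim S a \<le> enat N"
  let ?H = "height S ` {p\<in>Spec S. a \<in> p}"
  have "?H \<noteq> {}"
  proof
    assume "?H = {}"
    hence "codim S a = \<infinity>" unfolding codim_def by (simp add: Inf_enat_def)
    thus False using h by simp
  qed
  then have "Inf ?H \<in> ?H" unfolding Inf_enat_def by (auto intro: LeastI)
  then obtain p where "p \<in> Spec S" "a \<in> p" "height S p = codim S a" by (auto simp: codim_def)
  with h show "\<exists>p\<in>Spec S. a \<in> p \<and> height_le S p N" by (metis height_le_iff)
next
  assume "\<exists>p\<in>Spec S. a \<in> p \<and> height_le S p N"
  then obtain p where "p \<in> Spec S" "a \<in> p" "height_le S p N" by blast
  then have "codim S a \<le> height S p" unfolding codim_def by (auto intro: INF_lower)
  also have "\<dots> \<le> enat N" using \<open>height_le S p N\<close> height_le_iff by blast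
  finally show "codim S a \<le> enat N" .
qed

lemma codim_fin_iff: "codim S a \<noteq> \<infinity> \<longleftrightarrow> (\<exists>p\<in>Spec S. a \<in> p \<and> (\<exists>n. height_le S p n))"
proof -
  have "codim S a \<noteq> \<infinity> \<longleftrightarrow> (\<exists>N. codim S a \<le> enat N)"
    by (cases "codim S a") auto
  thus ?thesis by (auto simp: codim_le_iff)
qed

lemma codim_ultra:
  assumes "\<forall>p\<in>Spec S. c \<in> p \<longrightarrow> a \<in> p \<or> b \<in> p"
  shows "min (codim S a) (codim S b) \<le> codim S c"
  unfolding codim_def
proof (rule INF_greatest)
  fix p assume "p \<in> {p \<in> Spec S. c \<in> p}"
  with assms have "a \<in> p \<or> b \<in> p" by auto
  thus "min (INF p\<in>{p \<in> Spec S. a \<in> p}. height S p) (INF p\<in>{p \<in> Spec S. b \<in> p}. height S p) \<le> height S p"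
    using \<open>p \<in> {p \<in> Spec S. c \<in> p}\<close>
    by (auto intro: min.coboundedI1 min.coboundedI2 INF_lower)
qed

lemma codim_none: assumes "\<forall>p\<in>Spec S. a \<notin> p" shows "codim S a = \<infinity>"
proof -
  have "{p \<in> Spec S. a \<in> p} = {}" using assms by auto
  thus ?thesis unfolding codim_def by (simp add: Inf_enat_def)
qed

section \<open>Prime filter theorem\<close>

definition idl :: "'a::coheyting set \<Rightarrow> bool" where
  "idl K \<longleftrightarrow> bot \<in> K \<and> (\<forall>x\<in>K. \<forall>y. y \<le> x \<longrightarrow> y \<in> K) \<and> (\<forall>x\<in>K. \<forall>y\<in>K. x \<squnion> y \<in> K)"

lemma pft:
  fixes J :: "'a::coheyting set"
  assumes "idl J" "a \<notin> J"
  shows "\<exists>P. pf P \<and> a \<in> P \<and> P \<inter> J = {}"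
proof -
  let ?A = "{K. J \<subseteq> K \<and> a \<notin> K \<and> idl K}"
  have "\<forall>C\<in>chains ?A. \<exists>U\<in>?A. \<forall>X\<in>C. X \<subseteq> U"
  proof
    fix C assume C: "C \<in> chains ?A"
    show "\<exists>U\<in>?A. \<forall>X\<in>C. X \<subseteq> U"
    proof (cases "C = {}")
      case True thus ?thesis using assms by auto
    next
      case False
      have ch: "C \<subseteq> ?A" "\<forall>X\<in>C. \<forall>Y\<in>C. X \<subseteq> Y \<or> Y \<subseteq> X"
        using C by (auto simp: chains_def chain_subset_def)
      have "idl (\<Union>C)"
        unfolding idl_def
      proof (intro conjI ballI allI impI)
        show "bot \<in> \<Union>C" using False ch by (auto simp: idl_def)
      next
        fix x y assume "x \<in> \<Union>C" "y \<le> x" thus "y \<in> \<Union>C" using ch by (auto simp: idl_def)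
      next
        fix x y assume "x \<in> \<Union>C" "y \<in> \<Union>C"
        then obtain X Y where "X \<in> C" "Y \<in> C" "x \<in> X" "y \<in> Y" by auto
        from ch(2) \<open>X \<in> C\<close> \<open>Y \<in> C\<close> have "X \<subseteq> Y \<or> Y \<subseteq> X" by blast
        then obtain Z where "Z \<in> C" "x \<in> Z" "y \<in> Z"
          using \<open>X \<in> C\<close> \<open>Y \<in> C\<close> \<open>x \<in> X\<close> \<open>y \<in> Y\<close> by blast
        hence "x \<squnion> y \<in> Z" using ch(1) by (auto simp: idl_def)
        thus "x \<squnion> y \<in> \<Union>C" using \<open>Z \<in> C\<close> by blast
      qed
      moreover have "J \<subseteq> \<Union>C"
      proof -
        obtain X where "X \<in> C" using False by blast
        thus ?thesis using ch(1) by blast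
      qed
      moreover have "a \<notin> \<Union>C" using ch by auto
      ultimately have "\<Union>C \<in> ?A" by blast
      thus ?thesis by blast
    qed
  qed
  then obtain M where M: "M \<in> ?A" and max: "\<forall>X\<in>?A. M \<subseteq> X \<longrightarrow> X = M"
    by (blast dest: Zorn_Lemma2)
  have Mi: "idl M" "a \<notin> M" "J \<subseteq> M" using M by auto
  have down: "y \<le> x \<Longrightarrow> x \<in> M \<Longrightarrow> y \<in> M" for x y using Mi(1) by (auto simp: idl_def)
  have join: "x \<in> M \<Longrightarrow> y \<in> M \<Longrightarrow> x \<squnion> y \<in> M" for x y using Mi(1) by (auto simp: idl_def)
  have ext: "\<exists>m\<in>M. a \<le> m \<squnion> x" if "x \<notin> M" for x
  proof (rule ccontr)
    assume na: "\<not> (\<exists>m\<in>M. a \<le> m \<squnion> x)"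
    let ?K = "{z. \<exists>m\<in>M. z \<le> m \<squnion> x}"
    have "idl ?K" unfolding idl_def
    proof (intro conjI ballI allI impI)
      show "bot \<in> ?K" using Mi(1) by (auto simp: idl_def)
    next
      fix u v assume "u \<in> ?K" "v \<le> u" thus "v \<in> ?K" by (auto intro: order_trans)
    next
      fix u v assume "u \<in> ?K" "v \<in> ?K"
      then obtain m1 m2 where "m1 \<in> M" "m2 \<in> M" "u \<le> m1 \<squnion> x" "v \<le> m2 \<squnion> x" by auto
      hence "u \<squnion> v \<le> (m1 \<squnion> m2) \<squnion> x"
        by (meson le_supI le_supI1 le_supI2 order_trans sup_ge1 sup_ge2 sup_mono order_refl)
      thus "u \<squnion> v \<in> ?K" using join \<open>m1 \<in> M\<close> \<open>m2 \<in> M\<close> by blast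
    qed
    moreover have "M \<subseteq> ?K" by (auto intro: sup_ge1)
    moreover have "a \<notin> ?K" using na by auto
    ultimately have "?K \<in> ?A" "M \<subseteq> ?K" using Mi by auto
    hence "?K = M" using max by blast
    moreover have "x \<in> ?K" using Mi(1) by (auto simp: idl_def intro!: bexI[of _ bot])
    ultimately show False using that by simp
  qed
  let ?P = "- M"
  have "pf ?P" unfolding pf_def
  proof (intro conjI ballI allI impI)
    show "top \<in> - M" using Mi down top_greatest by blast
    show "bot \<notin> - M" using Mi(1) by (auto simp: idl_def)
  next
    fix x y assume "x \<in> - M" "x \<le> y" thus "y \<in> - M" using down by auto
  next
    fix x y assume "x \<in> - M" "y \<in> - M"
    hence "x \<notin> M" "y \<notin> M" by auto
    then obtain m1 m2 where m: "m1 \<in> M" "m2 \<in> M" "a \<le> m1 \<squnion> x" "a \<le> m2 \<squnion> y"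
      using ext by meson
    hence "a \<le> ((m1 \<squnion> m2) \<squnion> x) \<sqinter> ((m1 \<squnion> m2) \<squnion> y)"
      by (meson le_infI le_supI le_supI1 le_supI2 order_trans sup_ge1 sup_ge2 order_refl)
    also have "\<dots> = (m1 \<squnion> m2) \<squnion> (x \<sqinter> y)" by (simp add: sup_inf_distrib1)
    finally have am: "a \<le> (m1 \<squnion> m2) \<squnion> (x \<sqinter> y)" .
    show "x \<sqinter> y \<in> - M"
    proof
      assume "x \<sqinter> y \<in> M"
      hence "(m1 \<squnion> m2) \<squnion> (x \<sqinter> y) \<in> M" using join m by blast
      thus False using am down Mi(2) by blast
    qed
  next
    fix x y assume "x \<squnion> y \<in> - M" thus "x \<in> - M \<or> y \<in> - M" using join by auto
  qed
  thus ?thesis using Mi by auto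
qed

section \<open>Heights via elements\<close>

fun Wset :: "nat \<Rightarrow> 'a::coheyting set" where
  "Wset 0 = {top}"
| "Wset (Suc k) = {x \<sqinter> (d - x) | d x. d \<in> Wset k}"

lemma below_iff:
  assumes P: "pf P"
  shows "(\<exists>Q. pf Q \<and> Q \<subset> P \<and> d \<in> Q) \<longleftrightarrow> (\<exists>x. x \<sqinter> (d - x) \<in> P)"
proof
  assume "\<exists>Q. pf Q \<and> Q \<subset> P \<and> d \<in> Q"
  then obtain Q x where Q: "pf Q" "Q \<subseteq> P" "d \<in> Q" "x \<in> P" "x \<notin> Q" by blast
  then have "d - x \<in> Q" by (simp add: pf_diff)
  thus "\<exists>x. x \<sqinter> (d - x) \<in> P" using Q P by (metis pf_inf subsetD)
next
  assume "\<exists>x. x \<sqinter> (d - x) \<in> P"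
  then obtain x where "x \<sqinter> (d - x) \<in> P" by blast
  hence x: "x \<in> P" "d - x \<in> P" using P by (auto intro: pf_up)
  let ?J = "{y. \<exists>u. u \<notin> P \<and> y \<le> u \<squnion> x}"
  have "idl ?J" unfolding idl_def
  proof (intro conjI ballI allI impI)
    show "bot \<in> ?J" using P by (auto simp: pf_def)
  next
    fix u v assume "u \<in> ?J" "v \<le> u" thus "v \<in> ?J" by (auto intro: order_trans)
  next
    fix u v assume "u \<in> ?J" "v \<in> ?J"
    then obtain m1 m2 where "m1 \<notin> P" "m2 \<notin> P" "u \<le> m1 \<squnion> x" "v \<le> m2 \<squnion> x" by auto
    hence "u \<squnion> v \<le> (m1 \<squnion> m2) \<squnion> x"
      by (meson le_supI le_supI1 le_supI2 order_trans sup_ge1 sup_ge2 sup_mono order_refl)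
    moreover have "m1 \<squnion> m2 \<notin> P" using pf_sup[OF P] \<open>m1 \<notin> P\<close> \<open>m2 \<notin> P\<close> by blast
    ultimately show "u \<squnion> v \<in> ?J" by blast
  qed
  moreover have "d \<notin> ?J"
  proof
    assume "d \<in> ?J"
    then obtain u where "u \<notin> P" "d \<le> u \<squnion> x" by auto
    hence "d - x \<le> u" by (simp add: diff_le_iff sup_commute)
    thus False using x \<open>u \<notin> P\<close> P pf_up by blast
  qed
  ultimately obtain Q where Q: "pf Q" "d \<in> Q" "Q \<inter> ?J = {}" using pft by blast
  have "Q \<subseteq> P"
  proof
    fix y assume "y \<in> Q"
    show "y \<in> P"
    proof (rule ccontr)
      assume "y \<notin> P" hence "y \<in> ?J" by auto
      thus False using Q(3) \<open>y \<in> Q\<close> by blast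
    qed
  qed
  moreover have "x \<notin> Q"
  proof
    assume "x \<in> Q"
    moreover have "x \<in> ?J" using P by (auto simp: pf_def intro!: exI[of _ bot])
    ultimately show False using Q(3) by blast
  qed
  ultimately show "\<exists>Q. pf Q \<and> Q \<subset> P \<and> d \<in> Q" using Q x by blast
qed

lemma hl_char:
  "pf P \<Longrightarrow> hl {P. pf P} P n \<longleftrightarrow> P \<inter> Wset (Suc n) = {}"
proof (induction n arbitrary: P)
  case 0
  have "hl {P. pf P} P 0 \<longleftrightarrow> \<not> (\<exists>Q. pf Q \<and> Q \<subset> P \<and> top \<in> Q)"
    using pf_top by auto
  also have "\<dots> \<longleftrightarrow> \<not> (\<exists>x. x \<sqinter> (top - x) \<in> P)" using below_iff[OF 0] by blast
  finally show ?case by auto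
next
  case (Suc n)
  have "hl {P. pf P} P (Suc n) \<longleftrightarrow> (\<forall>Q\<in>{P. pf P}. Q \<subset> P \<longrightarrow> hl {P. pf P} Q n)"
    by (rule hl.simps(2))
  also have "\<dots> \<longleftrightarrow> (\<forall>Q. pf Q \<and> Q \<subset> P \<longrightarrow> Q \<inter> Wset (Suc n) = {})"
  proof -
    have "\<And>Q::'a set. pf Q \<Longrightarrow> hl {P. pf P} Q n \<longleftrightarrow> Q \<inter> Wset (Suc n) = {}" using Suc.IH by blast
    thus ?thesis by (metis mem_Collect_eq)
  qed
  also have "\<dots> \<longleftrightarrow> \<not> (\<exists>d\<in>Wset (Suc n). \<exists>Q. pf Q \<and> Q \<subset> P \<and> d \<in> Q)" by blast
  also have "\<dots> \<longleftrightarrow> \<not> (\<exists>d\<in>Wset (Suc n). \<exists>x. x \<sqinter> (d - x) \<in> P)"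
    using below_iff[OF Suc.prems] by blast
  also have "\<dots> \<longleftrightarrow> P \<inter> Wset (Suc (Suc n)) = {}"
    by (simp only: Wset.simps(2)[of "Suc n"]) blast
  finally show ?case .
qed




section \<open>Topology\<close>

lemma half_pow_le: "m \<le> n \<Longrightarrow> (1/2::real)^n \<le> (1/2)^m"
  by (rule power_decreasing) auto

lemma cdist_less_half:
  assumes "cdist S x y < (1/2)^n" shows "enat n < codim S (ch_symdiff S x y)"
proof (cases "codim S (ch_symdiff S x y)")
  case (enat m)
  with assms have "(1/2::real)^m < (1/2)^n" by (simp add: cdist_def)
  hence "n < m" by simp
  thus ?thesis using enat by simp
qed simp

lemma less_half_cdist:
  assumes "enat n < codim S (ch_symdiff S x y)" shows "cdist S x y < (1/2)^n"
proof (cases "codim S (ch_symdiff S x y)")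
  case (enat m)
  with assms have "n < m" by simp
  thus ?thesis using enat by (simp add: cdist_def)
qed (simp add: cdist_def)

lemma haus_iff:
  assumes refl: "\<forall>u\<in>ch_car S. codim S (ch_symdiff S u u) = \<infinity>"
    and sym: "\<forall>u\<in>ch_car S. \<forall>v\<in>ch_car S. codim S (ch_symdiff S u v) = codim S (ch_symdiff S v u)"
    and ultra: "\<forall>u\<in>ch_car S. \<forall>v\<in>ch_car S. \<forall>w\<in>ch_car S.
       min (codim S (ch_symdiff S u v)) (codim S (ch_symdiff S v w)) \<le> codim S (ch_symdiff S u w)"
  shows "codim_Hausdorff S \<longleftrightarrow> (\<forall>u\<in>ch_car S. \<forall>v\<in>ch_car S. u \<noteq> v \<longrightarrow> codim S (ch_symdiff S u v) \<noteq> \<infinity>)"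
proof
  assume H: "codim_Hausdorff S"
  show "\<forall>u\<in>ch_car S. \<forall>v\<in>ch_car S. u \<noteq> v \<longrightarrow> codim S (ch_symdiff S u v) \<noteq> \<infinity>"
  proof (intro ballI impI notI)
    fix u v assume uv: "u \<in> ch_car S" "v \<in> ch_car S" "u \<noteq> v" and inf: "codim S (ch_symdiff S u v) = \<infinity>"
    from H uv obtain U V where UV: "codim_open S U" "codim_open S V" "u \<in> U" "v \<in> V" "U \<inter> V = {}"
      unfolding codim_Hausdorff_def by blast
    from UV(1,3) obtain e where e: "e > 0" "\<forall>y\<in>ch_car S. cdist S u y < e \<longrightarrow> y \<in> U"
      unfolding codim_open_def by blast
    have "cdist S u v = 0" using inf by (simp add: cdist_def)
    hence "v \<in> U" using e uv by auto
    thus False using UV by blast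
  qed
next
  assume F: "\<forall>u\<in>ch_car S. \<forall>v\<in>ch_car S. u \<noteq> v \<longrightarrow> codim S (ch_symdiff S u v) \<noteq> \<infinity>"
  show "codim_Hausdorff S" unfolding codim_Hausdorff_def
  proof (intro ballI impI)
    fix u v assume uv: "u \<in> ch_car S" "v \<in> ch_car S" "u \<noteq> v"
    have "codim S (ch_symdiff S u v) \<noteq> \<infinity>" using F uv by blast
    then obtain n where n: "codim S (ch_symdiff S u v) = enat n" by (cases "codim S (ch_symdiff S u v)") auto
    define B where "B c = {y\<in>ch_car S. enat n < codim S (ch_symdiff S c y)}" for c
    have op: "codim_open S (B c)" if c: "c \<in> ch_car S" for c
      unfolding codim_open_def
    proof (intro conjI ballI)
      show "B c \<subseteq> ch_car S" by (auto simp: B_def)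
    next
      fix x assume x: "x \<in> B c"
      show "\<exists>e>0. \<forall>y\<in>ch_car S. cdist S x y < e \<longrightarrow> y \<in> B c"
      proof (intro exI[of _ "(1/2)^n"] conjI ballI impI)
        show "(0::real) < (1/2)^n" by simp
        fix y assume y: "y \<in> ch_car S" "cdist S x y < (1/2)^n"
        have "enat n < codim S (ch_symdiff S x y)" by (rule cdist_less_half[OF y(2)])
        moreover have "enat n < codim S (ch_symdiff S c x)" "x \<in> ch_car S" using x by (auto simp: B_def)
        moreover have "min (codim S (ch_symdiff S c x)) (codim S (ch_symdiff S x y)) \<le> codim S (ch_symdiff S c y)"
          using ultra c y calculation by blast
        ultimately show "y \<in> B c" using y by (auto simp: B_def min_def split: if_splits)
      qed
    qed
    have "u \<in> B u" "v \<in> B v" using uv refl by (auto simp: B_def)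
    moreover have "B u \<inter> B v = {}"
    proof (rule ccontr)
      assume "B u \<inter> B v \<noteq> {}"
      then obtain y where y: "y \<in> ch_car S" "enat n < codim S (ch_symdiff S u y)" "enat n < codim S (ch_symdiff S v y)"
        by (auto simp: B_def)
      hence "enat n < codim S (ch_symdiff S y v)" using sym uv by metis
      moreover have "min (codim S (ch_symdiff S u y)) (codim S (ch_symdiff S y v)) \<le> codim S (ch_symdiff S u v)"
        using ultra uv y by blast
      ultimately show False using y n by (auto simp: min_def split: if_splits)
    qed
    ultimately show "\<exists>U V. codim_open S U \<and> codim_open S V \<and> u \<in> U \<and> v \<in> V \<and> U \<inter> V = {}"
      using op uv by blast
  qed
qed

section \<open>The full algebra\<close>

lemma full_car[simp]: "ch_car (full_cha :: 'a::coheyting cha) = UNIV"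
  by (simp add: full_cha_def)

lemma full_sd[simp]: "ch_symdiff (full_cha :: 'a::coheyting cha) a b = symdiff a b"
  by (simp add: full_cha_def ch_symdiff_def symdiff_def)

lemma codim_full_le: "codim (full_cha :: 'a::coheyting cha) a \<le> enat N \<longleftrightarrow> (\<exists>P. pf P \<and> a \<in> P \<and> hl {P. pf P} P N)"
  by (simp add: codim_le_iff Spec_full height_le_hl)

lemma codim_full_fin: "codim (full_cha :: 'a::coheyting cha) a \<noteq> \<infinity> \<longleftrightarrow> (\<exists>P. pf P \<and> a \<in> P \<and> (\<exists>n. hl {P. pf P} P n))"
  unfolding codim_fin_iff Spec_full height_le_hl by simp

lemma haus_full: "codim_Hausdorff (full_cha :: 'a::coheyting cha) \<longleftrightarrow>
   (\<forall>u v::'a. u \<noteq> v \<longrightarrow> codim (full_cha :: 'a cha) (symdiff u v) \<noteq> \<infinity>)"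
proof -
  have "codim_Hausdorff (full_cha :: 'a cha) \<longleftrightarrow>
     (\<forall>u\<in>ch_car (full_cha :: 'a cha). \<forall>v\<in>ch_car (full_cha :: 'a cha). u \<noteq> v \<longrightarrow> codim (full_cha :: 'a cha) (ch_symdiff full_cha u v) \<noteq> \<infinity>)"
  proof (rule haus_iff)
    show "\<forall>u\<in>ch_car (full_cha :: 'a cha). codim full_cha (ch_symdiff full_cha u u) = \<infinity>"
      by (auto intro!: codim_none simp: Spec_full pf_def)
    show "\<forall>u\<in>ch_car (full_cha :: 'a cha). \<forall>v\<in>ch_car (full_cha :: 'a cha).
        codim full_cha (ch_symdiff full_cha u v) = codim full_cha (ch_symdiff full_cha v u)"
      by (simp add: symdiff_comm)
    show "\<forall>u\<in>ch_car (full_cha :: 'a cha). \<forall>v\<in>ch_car (full_cha :: 'a cha). \<forall>w\<in>ch_car (full_cha :: 'a cha).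
       min (codim full_cha (ch_symdiff full_cha u v)) (codim full_cha (ch_symdiff full_cha v w))
       \<le> codim full_cha (ch_symdiff full_cha u w)"
    proof (intro ballI)
      fix u v w :: 'a
      show "min (codim full_cha (ch_symdiff full_cha u v)) (codim full_cha (ch_symdiff full_cha v w))
       \<le> codim full_cha (ch_symdiff full_cha u w)"
        unfolding full_sd
      proof (rule codim_ultra, intro ballI impI)
        fix p assume "p \<in> Spec (full_cha :: 'a cha)" "symdiff u w \<in> p"
        hence "pf p" "symdiff u v \<squnion> symdiff v w \<in> p"
          by (auto simp: Spec_full intro: pf_up[OF _ _ symdiff_trans])
        thus "symdiff u v \<in> p \<or> symdiff v w \<in> p" by (rule pf_sup)
      qed
    qed
  qed
  thus ?thesis by simp
qed

lemma closed_iff: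
  "codim_closed (full_cha :: 'a::coheyting cha) I \<longleftrightarrow>
    (\<forall>a. a \<notin> I \<longrightarrow> (\<exists>N. \<forall>b\<in>I. codim (full_cha :: 'a cha) (symdiff a b) \<le> enat N))"
proof
  assume C: "codim_closed (full_cha :: 'a cha) I"
  show "\<forall>a. a \<notin> I \<longrightarrow> (\<exists>N. \<forall>b\<in>I. codim (full_cha :: 'a cha) (symdiff a b) \<le> enat N)"
  proof (intro allI impI)
    fix a assume a: "a \<notin> I"
    from C a obtain e where e: "e > 0" "\<forall>y. cdist (full_cha :: 'a cha) a y < e \<longrightarrow> y \<in> UNIV - I"
      unfolding codim_closed_def codim_open_def by auto
    obtain N where N: "(1/2::real)^N < e" using real_arch_pow_inv[OF e(1), of "1/2"] by auto
    show "\<exists>N. \<forall>b\<in>I. codim (full_cha :: 'a cha) (symdiff a b) \<le> enat N"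
    proof (intro exI ballI)
      fix b assume b: "b \<in> I"
      hence ge: "\<not> cdist (full_cha :: 'a cha) a b < e" using e by auto
      show "codim (full_cha :: 'a cha) (symdiff a b) \<le> enat N"
      proof (cases "codim (full_cha :: 'a cha) (symdiff a b)")
        case (enat m)
        hence "e \<le> (1/2)^m" using ge by (simp add: cdist_def)
        hence "\<not> N \<le> m" using N half_pow_le[of N m] by linarith
        thus ?thesis using enat by simp
      next
        case infinity thus ?thesis using ge e by (simp add: cdist_def)
      qed
    qed
  qed
next
  assume R: "\<forall>a. a \<notin> I \<longrightarrow> (\<exists>N. \<forall>b\<in>I. codim (full_cha :: 'a cha) (symdiff a b) \<le> enat N)"
  show "codim_closed (full_cha :: 'a cha) I"
    unfolding codim_closed_def codim_open_def
  proof (intro conjI ballI)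
    fix a assume "a \<in> ch_car (full_cha :: 'a cha) - I"
    then obtain N where N: "\<forall>b\<in>I. codim (full_cha :: 'a cha) (symdiff a b) \<le> enat N" using R by auto
    show "\<exists>e>0. \<forall>y\<in>ch_car (full_cha :: 'a cha). cdist full_cha a y < e \<longrightarrow> y \<in> ch_car (full_cha :: 'a cha) - I"
    proof (intro exI[of _ "(1/2)^N"] conjI ballI impI)
      show "(0::real) < (1/2)^N" by simp
      fix y assume "cdist (full_cha :: 'a cha) a y < (1/2)^N"
      hence "enat N < codim (full_cha :: 'a cha) (symdiff a y)" using cdist_less_half by fastforce
      thus "y \<in> ch_car (full_cha :: 'a cha) - I" using N by (auto simp: not_le[symmetric])
    qed
  qed auto
qed




section \<open>Quotient\<close>

lemma idl_iff: "idl I \<longleftrightarrow> cha_ideal I" by (simp add: idl_def cha_ideal_def)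

lemma I_down: "cha_ideal I \<Longrightarrow> y \<in> I \<Longrightarrow> x \<le> y \<Longrightarrow> x \<in> I" by (auto simp: cha_ideal_def)
lemma I_sup: "cha_ideal I \<Longrightarrow> x \<in> I \<Longrightarrow> y \<in> I \<Longrightarrow> x \<squnion> y \<in> I" by (auto simp: cha_ideal_def)
lemma I_bot: "cha_ideal I \<Longrightarrow> bot \<in> I" by (auto simp: cha_ideal_def)

lemma qc_eq: assumes "cha_ideal I" shows "qclass I x = qclass I y \<longleftrightarrow> symdiff x y \<in> I"
proof
  assume "qclass I x = qclass I y"
  moreover have "y \<in> qclass I y" using I_bot[OF assms] by (simp add: qclass_def)
  ultimately have "y \<in> qclass I x" by simp
  thus "symdiff x y \<in> I" by (simp add: qclass_def)
next
  assume h: "symdiff x y \<in> I"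
  show "qclass I x = qclass I y"
  proof (rule set_eqI)
    fix z
    have "symdiff x z \<in> I" if "symdiff y z \<in> I"
      using I_down[OF assms I_sup[OF assms h that] symdiff_trans] .
    moreover have "symdiff y z \<in> I" if "symdiff x z \<in> I"
      using I_down[OF assms I_sup[OF assms h[unfolded symdiff_comm[of x y]] that] symdiff_trans] .
    ultimately show "z \<in> qclass I x \<longleftrightarrow> z \<in> qclass I y" by (auto simp: qclass_def)
  qed
qed

lemma qc_some: assumes "cha_ideal I" shows "qclass I (SOME a. a \<in> qclass I x) = qclass I x"
proof -
  have "x \<in> qclass I x" using I_bot[OF assms] by (simp add: qclass_def)
  hence "(SOME a. a \<in> qclass I x) \<in> qclass I x" by (rule someI)
  hence "symdiff x (SOME a. a \<in> qclass I x) \<in> I" by (simp add: qclass_def)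
  thus ?thesis using qc_eq[OF assms] symdiff_comm by metis
qed

lemma qc_cong:
  assumes "cha_ideal I" "qclass I x = qclass I x'" "qclass I y = qclass I y'"
    and "symdiff u v \<le> symdiff x x' \<squnion> symdiff y y'"
  shows "qclass I u = qclass I v"
proof -
  have "symdiff x x' \<in> I" "symdiff y y' \<in> I" using assms(2,3) qc_eq[OF assms(1)] by blast+
  hence "symdiff u v \<in> I" using I_down[OF assms(1) I_sup[OF assms(1)] assms(4)] by blast
  thus ?thesis using qc_eq[OF assms(1)] by blast
qed

lemma q_join: assumes "cha_ideal I"
  shows "ch_join (quot_cha I) (qclass I x) (qclass I y) = qclass I (x \<squnion> y)"
  unfolding quot_cha_def by simp (rule qc_cong[OF assms qc_some[OF assms] qc_some[OF assms] symdiff_sup])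

lemma q_meet: assumes "cha_ideal I"
  shows "ch_meet (quot_cha I) (qclass I x) (qclass I y) = qclass I (x \<sqinter> y)"
  unfolding quot_cha_def by simp (rule qc_cong[OF assms qc_some[OF assms] qc_some[OF assms] symdiff_inf])

lemma q_diff: assumes "cha_ideal I"
  shows "ch_diff (quot_cha I) (qclass I x) (qclass I y) = qclass I (x - y)"
  unfolding quot_cha_def by simp (rule qc_cong[OF assms qc_some[OF assms] qc_some[OF assms] symdiff_diff])

lemma q_car: "ch_car (quot_cha I) = range (qclass I)" by (simp add: quot_cha_def)
lemma q_zero: "ch_zero (quot_cha I) = qclass I bot" by (simp add: quot_cha_def)
lemma q_one: "ch_one (quot_cha I) = qclass I top" by (simp add: quot_cha_def)

lemma q_sd: assumes "cha_ideal I"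
  shows "ch_symdiff (quot_cha I) (qclass I x) (qclass I y) = qclass I (symdiff x y)"
  by (simp add: ch_symdiff_def q_diff[OF assms] q_join[OF assms] symdiff_def)

lemma q_le: assumes "cha_ideal I"
  shows "ch_le (quot_cha I) (qclass I x) (qclass I y) \<longleftrightarrow> qclass I (x \<squnion> y) = qclass I y"
  by (simp add: ch_le_def q_join[OF assms])

lemma sat:
  assumes I: "cha_ideal I" and P: "pf P" "P \<inter> I = {}"
  shows "qclass I x \<in> qclass I ` P \<longleftrightarrow> x \<in> P"
proof
  assume "qclass I x \<in> qclass I ` P"
  then obtain y where y: "y \<in> P" "qclass I x = qclass I y" by auto
  hence s: "symdiff y x \<in> I" using qc_eq[OF I] symdiff_comm by metis
  have "y \<le> x \<squnion> (y - x)" by (rule le_sd)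
  also have "\<dots> \<le> x \<squnion> symdiff y x" by (simp add: symdiff_def le_supI2)
  finally have "x \<squnion> symdiff y x \<in> P" using P(1) y(1) pf_up by blast
  moreover have "symdiff y x \<notin> P" using s P(2) by blast
  ultimately show "x \<in> P" using pf_sup[OF P(1)] by blast
qed auto

definition SK :: "'a::coheyting set \<Rightarrow> 'a set set" where
  "SK I = {P. pf P \<and> P \<inter> I = {}}"

lemma pf_to_q:
  assumes I: "cha_ideal I" and P: "pf P" "P \<inter> I = {}"
  shows "prime_filter (quot_cha I) (qclass I ` P)"
  unfolding prime_filter_def
proof (intro conjI ballI impI)
  note s = sat[OF I P]
  show "qclass I ` P \<subseteq> ch_car (quot_cha I)" by (auto simp: q_car)
  show "ch_one (quot_cha I) \<in> qclass I ` P" using pf_top[OF P(1)] by (simp add: q_one)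
  show "ch_zero (quot_cha I) \<notin> qclass I ` P" using P by (simp add: q_zero s pf_def)
next
  fix a b assume a: "a \<in> qclass I ` P" and b: "b \<in> ch_car (quot_cha I)" and le: "ch_le (quot_cha I) a b"
  from a obtain x where x: "x \<in> P" "a = qclass I x" by blast
  from b obtain y where y: "b = qclass I y" unfolding q_car by blast
  note xy = x(2) y x(1)
  have "ch_le (quot_cha I) (qclass I x) (qclass I y)" using le xy(1,2) by (simp only:)
  hence eq: "qclass I (x \<squnion> y) = qclass I y" by (simp only: q_le[OF I])
  have "b = qclass I (x \<squnion> y)" by (simp only: xy(2) eq)
  moreover have "x \<squnion> y \<in> P" using pf_up[OF P(1) xy(3) sup_ge1] .
  ultimately show "b \<in> qclass I ` P" by blast
next
  fix a b assume "a \<in> qclass I ` P" "b \<in> qclass I ` P"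
  then obtain x y where xy: "a = qclass I x" "b = qclass I y" "x \<in> P" "y \<in> P" by auto
  have "ch_meet (quot_cha I) a b = qclass I (x \<sqinter> y)" using q_meet[OF I] xy by simp
  moreover have "x \<sqinter> y \<in> P" using P(1) pf_inf xy by blast
  ultimately show "ch_meet (quot_cha I) a b \<in> qclass I ` P" by blast
next
  fix a b assume a: "a \<in> ch_car (quot_cha I)" and b: "b \<in> ch_car (quot_cha I)"
    and j: "ch_join (quot_cha I) a b \<in> qclass I ` P"
  from a obtain x where x: "a = qclass I x" unfolding q_car by blast
  from b obtain y where y: "b = qclass I y" unfolding q_car by blast
  have "qclass I (x \<squnion> y) \<in> qclass I ` P" using j x y q_join[OF I] by simp
  note xy = x y this
  hence "x \<squnion> y \<in> P" using sat[OF I P] by blast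
  hence "x \<in> P \<or> y \<in> P" using pf_sup[OF P(1)] by blast
  thus "a \<in> qclass I ` P \<or> b \<in> qclass I ` P" using xy by auto
qed

lemma q_to_pf:
  assumes I: "cha_ideal I" and p: "prime_filter (quot_cha I) p"
  shows "{x. qclass I x \<in> p} \<in> SK I" "p = qclass I ` {x. qclass I x \<in> p}"
proof -
  note pp = p[unfolded prime_filter_def q_car]
  have pm: "\<forall>a\<in>p. \<forall>b\<in>p. ch_meet (quot_cha I) a b \<in> p" using p by (simp add: prime_filter_def)
  have pj: "\<forall>a b. ch_join (quot_cha I) (qclass I a) (qclass I b) \<in> p \<longrightarrow> qclass I a \<in> p \<or> qclass I b \<in> p"
    using p by (simp add: prime_filter_def q_car)
  show "p = qclass I ` {x. qclass I x \<in> p}" using pp by auto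
  have "pf {x. qclass I x \<in> p}" unfolding pf_def
  proof (intro conjI ballI allI impI)
    show "top \<in> {x. qclass I x \<in> p}" using pp by (simp add: q_one)
    show "bot \<notin> {x. qclass I x \<in> p}" using pp by (simp add: q_zero)
  next
    fix a b :: 'a assume "a \<in> {x. qclass I x \<in> p}" "a \<le> b"
    moreover have "ch_le (quot_cha I) (qclass I a) (qclass I b)"
      using \<open>a \<le> b\<close> by (simp add: q_le[OF I] sup_absorb2)
    ultimately show "b \<in> {x. qclass I x \<in> p}" using pp by blast
  next
    fix a b assume "a \<in> {x. qclass I x \<in> p}" "b \<in> {x. qclass I x \<in> p}"
    hence "ch_meet (quot_cha I) (qclass I a) (qclass I b) \<in> p" using pm by blast
    thus "a \<sqinter> b \<in> {x. qclass I x \<in> p}" by (simp add: q_meet[OF I])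
  next
    fix a b assume "a \<squnion> b \<in> {x. qclass I x \<in> p}"
    hence "ch_join (quot_cha I) (qclass I a) (qclass I b) \<in> p" by (simp add: q_join[OF I])
    thus "a \<in> {x. qclass I x \<in> p} \<or> b \<in> {x. qclass I x \<in> p}" using pj by blast
  qed
  moreover have "{x. qclass I x \<in> p} \<inter> I = {}"
  proof -
    have "qclass I i = qclass I bot" if "i \<in> I" for i using that qc_eq[OF I] by simp
    thus ?thesis using pp by (auto simp: q_zero)
  qed
  ultimately show "{x. qclass I x \<in> p} \<in> SK I" by (simp add: SK_def)
qed

lemma Spec_q: assumes I: "cha_ideal I" shows "Spec (quot_cha I) = image (qclass I) ` SK I"
proof
  show "Spec (quot_cha I) \<subseteq> image (qclass I) ` SK I"
  proof
    fix p assume "p \<in> Spec (quot_cha I)"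
    hence pp: "prime_filter (quot_cha I) p" by (simp add: Spec_def)
    show "p \<in> image (qclass I) ` SK I" using q_to_pf[OF I pp] by (metis image_eqI)
  qed
  show "image (qclass I) ` SK I \<subseteq> Spec (quot_cha I)"
    using pf_to_q[OF I] by (auto simp: Spec_def SK_def)
qed

lemma q_order: assumes I: "cha_ideal I"
  shows "\<forall>P\<in>SK I. \<forall>P'\<in>SK I. qclass I ` P \<subseteq> qclass I ` P' \<longleftrightarrow> P \<subseteq> P'"
proof (intro ballI iffI)
  fix P P' assume "P \<in> SK I" "P' \<in> SK I" "qclass I ` P \<subseteq> qclass I ` P'"
  show "P \<subseteq> P'"
  proof
    fix x assume "x \<in> P"
    hence "qclass I x \<in> qclass I ` P'" using \<open>qclass I ` P \<subseteq> _\<close> by blast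
    moreover have "pf P'" "P' \<inter> I = {}" using \<open>P' \<in> SK I\<close> by (auto simp: SK_def)
    ultimately show "x \<in> P'" using sat[OF I] by blast
  qed
next
  fix P P' :: "'a set" assume "P \<subseteq> P'" thus "qclass I ` P \<subseteq> qclass I ` P'" by (rule image_mono)
qed

lemma q_hl: assumes I: "cha_ideal I" and P: "P \<in> SK I"
  shows "hl (Spec (quot_cha I)) (qclass I ` P) n \<longleftrightarrow> hl {P. pf P} P n"
proof -
  have "hl (Spec (quot_cha I)) (qclass I ` P) n \<longleftrightarrow> hl (SK I) P n"
    unfolding Spec_q[OF I] by (rule hl_iso[OF q_order[OF I] P])
  also have "\<dots> \<longleftrightarrow> hl {P. pf P} P n"
  proof (rule hl_down)
    show "SK I \<subseteq> {P. pf P}" by (auto simp: SK_def)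
    show "P \<in> SK I" by (rule P)
    show "\<forall>q\<in>{P. pf P}. \<forall>p\<in>SK I. q \<subseteq> p \<longrightarrow> q \<in> SK I"
    proof (intro ballI impI)
      fix q p assume "q \<in> {P. pf P}" "p \<in> SK I" "q \<subseteq> p"
      thus "q \<in> SK I" unfolding SK_def by blast
    qed
  qed
  finally show ?thesis .
qed

lemma q_codim_fin: assumes I: "cha_ideal I"
  shows "codim (quot_cha I) (qclass I z) \<noteq> \<infinity> \<longleftrightarrow>
     (\<exists>P. pf P \<and> P \<inter> I = {} \<and> z \<in> P \<and> (\<exists>n. hl {P. pf P} P n))"
  unfolding codim_fin_iff height_le_hl
proof
  assume "\<exists>p\<in>Spec (quot_cha I). qclass I z \<in> p \<and> (\<exists>n. hl (Spec (quot_cha I)) p n)"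
  then obtain P n where P: "P \<in> SK I" "qclass I z \<in> qclass I ` P" "hl (Spec (quot_cha I)) (qclass I ` P) n"
    unfolding Spec_q[OF I] by blast
  thus "\<exists>P. pf P \<and> P \<inter> I = {} \<and> z \<in> P \<and> (\<exists>n. hl {P. pf P} P n)"
    using sat[OF I] q_hl[OF I] by (auto simp: SK_def)
next
  assume "\<exists>P. pf P \<and> P \<inter> I = {} \<and> z \<in> P \<and> (\<exists>n. hl {P. pf P} P n)"
  then obtain P n where P: "P \<in> SK I" "z \<in> P" "hl {P. pf P} P n" by (auto simp: SK_def)
  thus "\<exists>p\<in>Spec (quot_cha I). qclass I z \<in> p \<and> (\<exists>n. hl (Spec (quot_cha I)) p n)"
    using q_hl[OF I P(1)] Spec_q[OF I] by blast
qed

lemma haus_q: assumes I: "cha_ideal I"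
  shows "codim_Hausdorff (quot_cha I) \<longleftrightarrow>
     (\<forall>z. z \<notin> I \<longrightarrow> (\<exists>P. pf P \<and> P \<inter> I = {} \<and> z \<in> P \<and> (\<exists>n. hl {P. pf P} P n)))"
proof -
  let ?Q = "quot_cha I"
  have ult: "min (codim ?Q (qclass I a)) (codim ?Q (qclass I b)) \<le> codim ?Q (qclass I c)"
    if "\<forall>P. pf P \<longrightarrow> c \<in> P \<longrightarrow> a \<in> P \<or> b \<in> P" for a b c
  proof (rule codim_ultra, intro ballI impI)
    fix p assume "p \<in> Spec ?Q" "qclass I c \<in> p"
    then obtain P where P: "P \<in> SK I" "p = qclass I ` P" by (auto simp: Spec_q[OF I])
    thus "qclass I a \<in> p \<or> qclass I b \<in> p" using that sat[OF I] \<open>qclass I c \<in> p\<close>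
      by (auto simp: SK_def)
  qed
  have "codim_Hausdorff ?Q \<longleftrightarrow>
     (\<forall>u\<in>ch_car ?Q. \<forall>v\<in>ch_car ?Q. u \<noteq> v \<longrightarrow> codim ?Q (ch_symdiff ?Q u v) \<noteq> \<infinity>)"
  proof (rule haus_iff)
    show "\<forall>u\<in>ch_car ?Q. codim ?Q (ch_symdiff ?Q u u) = \<infinity>"
    proof
      fix u assume "u \<in> ch_car ?Q"
      then obtain x where u: "u = qclass I x" by (auto simp: q_car)
      show "codim ?Q (ch_symdiff ?Q u u) = \<infinity>"
        unfolding u q_sd[OF I] symdiff_self
      proof (rule codim_none, intro ballI)
        fix p assume "p \<in> Spec ?Q"
        then obtain P where P: "pf P" "P \<inter> I = {}" "p = qclass I ` P" by (auto simp: Spec_q[OF I] SK_def)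
        thus "qclass I bot \<notin> p" using sat[OF I P(1,2)] pf_bot[OF P(1)] by blast
      qed
    qed
    show "\<forall>u\<in>ch_car ?Q. \<forall>v\<in>ch_car ?Q. codim ?Q (ch_symdiff ?Q u v) = codim ?Q (ch_symdiff ?Q v u)"
      by (auto simp: q_car q_sd[OF I] symdiff_comm)
    show "\<forall>u\<in>ch_car ?Q. \<forall>v\<in>ch_car ?Q. \<forall>w\<in>ch_car ?Q.
       min (codim ?Q (ch_symdiff ?Q u v)) (codim ?Q (ch_symdiff ?Q v w)) \<le> codim ?Q (ch_symdiff ?Q u w)"
    proof (intro ballI)
      fix u v w assume "u \<in> ch_car ?Q" "v \<in> ch_car ?Q" "w \<in> ch_car ?Q"
      then obtain x y z where xyz: "u = qclass I x" "v = qclass I y" "w = qclass I z" by (auto simp: q_car)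
      have "min (codim ?Q (qclass I (symdiff x y))) (codim ?Q (qclass I (symdiff y z)))
          \<le> codim ?Q (qclass I (symdiff x z))"
      proof (rule ult, intro allI impI)
        fix P assume "pf P" "symdiff x z \<in> P"
        hence "symdiff x y \<squnion> symdiff y z \<in> P" using pf_up[OF _ _ symdiff_trans] by blast
        thus "symdiff x y \<in> P \<or> symdiff y z \<in> P" by (rule pf_sup[OF \<open>pf P\<close>])
      qed
      thus "min (codim ?Q (ch_symdiff ?Q u v)) (codim ?Q (ch_symdiff ?Q v w)) \<le> codim ?Q (ch_symdiff ?Q u w)"
        by (simp add: xyz q_sd[OF I])
    qed
  qed
  also have "\<dots> \<longleftrightarrow> (\<forall>z. z \<notin> I \<longrightarrow> (\<exists>P. pf P \<and> P \<inter> I = {} \<and> z \<in> P \<and> (\<exists>n. hl {P. pf P} P n)))"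
  proof
    assume H: "\<forall>u\<in>ch_car ?Q. \<forall>v\<in>ch_car ?Q. u \<noteq> v \<longrightarrow> codim ?Q (ch_symdiff ?Q u v) \<noteq> \<infinity>"
    show "\<forall>z. z \<notin> I \<longrightarrow> (\<exists>P. pf P \<and> P \<inter> I = {} \<and> z \<in> P \<and> (\<exists>n. hl {P. pf P} P n))"
    proof (intro allI impI)
      fix z assume "z \<notin> I"
      hence "qclass I z \<noteq> qclass I bot" by (simp add: qc_eq[OF I])
      hence "codim ?Q (qclass I (symdiff z bot)) \<noteq> \<infinity>"
        using H[unfolded q_car] q_sd[OF I] by (metis rangeI)
      thus "\<exists>P. pf P \<and> P \<inter> I = {} \<and> z \<in> P \<and> (\<exists>n. hl {P. pf P} P n)"
        using q_codim_fin[OF I] by simp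
    qed
  next
    assume E: "\<forall>z. z \<notin> I \<longrightarrow> (\<exists>P. pf P \<and> P \<inter> I = {} \<and> z \<in> P \<and> (\<exists>n. hl {P. pf P} P n))"
    show "\<forall>u\<in>ch_car ?Q. \<forall>v\<in>ch_car ?Q. u \<noteq> v \<longrightarrow> codim ?Q (ch_symdiff ?Q u v) \<noteq> \<infinity>"
    proof (intro ballI impI)
      fix u v assume "u \<in> ch_car ?Q" "v \<in> ch_car ?Q" "u \<noteq> v"
      then obtain x y where xy: "u = qclass I x" "v = qclass I y" "qclass I x \<noteq> qclass I y" by (auto simp: q_car)
      have "symdiff x y \<notin> I" using xy(3) by (simp add: qc_eq[OF I])
      hence "codim ?Q (qclass I (symdiff x y)) \<noteq> \<infinity>" using E q_codim_fin[OF I] by blast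
      thus "codim ?Q (ch_symdiff ?Q u v) \<noteq> \<infinity>" by (simp add: xy q_sd[OF I])
    qed
  qed
  finally show ?thesis .
qed

inductive_set gen :: "'a::coheyting set \<Rightarrow> 'a set \<Rightarrow> 'a set" for I W where
  g1: "i \<in> I \<Longrightarrow> i \<in> gen I W"
| g2: "w \<in> W \<Longrightarrow> w \<in> gen I W"
| g3: "x \<in> gen I W \<Longrightarrow> y \<in> gen I W \<Longrightarrow> x \<squnion> y \<in> gen I W"
| g4: "x \<in> gen I W \<Longrightarrow> y \<le> x \<Longrightarrow> y \<in> gen I W"

lemma gen_prop:
  assumes x: "x \<in> gen I (Wset (Suc N))" and I: "cha_ideal I"
  shows "\<exists>b\<in>I. \<forall>P. pf P \<longrightarrow> hl {P. pf P} P N \<longrightarrow> x - b \<notin> P"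
  using x
proof induction
  case (g1 i) thus ?case by (auto intro!: bexI[of _ i] simp: pf_def)
next
  case (g2 w)
  show ?case
  proof (intro bexI[of _ bot] allI impI)
    show "bot \<in> I" using I_bot[OF I] .
    fix P :: "'a set" assume "pf P" "hl {P. pf P} P N"
    hence "P \<inter> Wset (Suc N) = {}" using hl_char by blast
    thus "w - bot \<notin> P" using g2 by (simp only: diff_bot) blast
  qed
next
  case (g3 x y)
  then obtain b1 b2 where b: "b1 \<in> I" "b2 \<in> I"
    "\<forall>P. pf P \<longrightarrow> hl {P. pf P} P N \<longrightarrow> x - b1 \<notin> P"
    "\<forall>P. pf P \<longrightarrow> hl {P. pf P} P N \<longrightarrow> y - b2 \<notin> P" by blast
  show ?case
  proof (intro bexI[of _ "b1 \<squnion> b2"] allI impI notI)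
    show "b1 \<squnion> b2 \<in> I" using I_sup[OF I b(1,2)] .
    fix P :: "'a set" assume pP: "pf P" and hP: "hl {P. pf P} P N" and m: "x \<squnion> y - (b1 \<squnion> b2) \<in> P"
    have "(x - b1) \<squnion> (y - b2) \<in> P" using pf_up[OF pP m diff_sup_le] .
    hence "x - b1 \<in> P \<or> y - b2 \<in> P" by (rule pf_sup[OF pP])
    thus False using pP hP b(3,4) by blast
  qed
next
  case (g4 x y)
  then obtain b where b: "b \<in> I" "\<forall>P. pf P \<longrightarrow> hl {P. pf P} P N \<longrightarrow> x - b \<notin> P" by blast
  show ?case
  proof (intro bexI[of _ b] allI impI notI)
    show "b \<in> I" by (rule b(1))
    fix P :: "'a set" assume pP: "pf P" and hP: "hl {P. pf P} P N" and m: "y - b \<in> P"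
    have "x - b \<in> P" using pf_up[OF pP m diff_mono1[OF \<open>y \<le> x\<close>]] .
    thus False using pP hP b(2) by blast
  qed
qed

lemma symdiff_inf_le: "symdiff (z::'a::coheyting) (z \<sqinter> b) \<le> z - b"
proof -
  have "z \<le> (z \<sqinter> b) \<squnion> (z - b)"
  proof -
    have "(z \<sqinter> b) \<squnion> (z - b) = (z \<squnion> (z - b)) \<sqinter> (b \<squnion> (z - b))" by (rule sup_inf_distrib2)
    moreover have "z \<le> b \<squnion> (z - b)" by (rule le_sd)
    ultimately show ?thesis by simp
  qed
  hence "z - (z \<sqinter> b) \<le> z - b" by (simp add: diff_le_iff)
  moreover have "(z \<sqinter> b) - z = bot" by (rule antisym) (simp_all add: diff_le_iff)
  ultimately show ?thesis by (simp add: symdiff_def)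
qed

lemma main_equiv:
  fixes I :: "'a::coheyting set"
  assumes I: "cha_ideal I"
  shows "codim_Hausdorff (quot_cha I) \<longleftrightarrow> codim_closed (full_cha :: 'a cha) I"
  unfolding haus_q[OF I] closed_iff
proof
  assume E: "\<forall>z. z \<notin> I \<longrightarrow> (\<exists>P. pf P \<and> P \<inter> I = {} \<and> z \<in> P \<and> (\<exists>n. hl {P. pf P} P n))"
  show "\<forall>a. a \<notin> I \<longrightarrow> (\<exists>N. \<forall>b\<in>I. codim (full_cha :: 'a cha) (symdiff a b) \<le> enat N)"
  proof (intro allI impI)
    fix a assume "a \<notin> I"
    then obtain P n where P: "pf P" "P \<inter> I = {}" "a \<in> P" "hl {P. pf P} P n" using E by blast
    show "\<exists>N. \<forall>b\<in>I. codim (full_cha :: 'a cha) (symdiff a b) \<le> enat N"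
    proof (intro exI ballI)
      fix b assume "b \<in> I"
      hence "a - b \<in> P" using P pf_diff by blast
      hence "symdiff a b \<in> P" unfolding symdiff_def using pf_up[OF P(1) _ sup_ge1] by blast
      thus "codim (full_cha :: 'a cha) (symdiff a b) \<le> enat n" using P by (auto simp: codim_full_le)
    qed
  qed
next
  assume C: "\<forall>a. a \<notin> I \<longrightarrow> (\<exists>N. \<forall>b\<in>I. codim (full_cha :: 'a cha) (symdiff a b) \<le> enat N)"
  show "\<forall>z. z \<notin> I \<longrightarrow> (\<exists>P. pf P \<and> P \<inter> I = {} \<and> z \<in> P \<and> (\<exists>n. hl {P. pf P} P n))"
  proof (intro allI impI)
    fix z assume z: "z \<notin> I"
    then obtain N where N: "\<forall>b\<in>I. codim (full_cha :: 'a cha) (symdiff z b) \<le> enat N" using C by blast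
    let ?G = "gen I (Wset (Suc N))"
    have "idl ?G" unfolding idl_def using I_bot[OF I] by (auto intro: gen.intros)
    moreover have "z \<notin> ?G"
    proof
      assume "z \<in> ?G"
      then obtain b where b: "b \<in> I" "\<forall>P. pf P \<longrightarrow> hl {P. pf P} P N \<longrightarrow> z - b \<notin> P"
        using gen_prop I by blast
      have "z \<sqinter> b \<in> I" using I_down[OF I b(1)] by simp
      then obtain P where P: "pf P" "symdiff z (z \<sqinter> b) \<in> P" "hl {P. pf P} P N"
        using N codim_full_le by blast
      hence "z - b \<in> P" using pf_up[OF P(1) P(2) symdiff_inf_le] by blast
      thus False using b P by blast
    qed
    ultimately obtain P where P: "pf P" "z \<in> P" "P \<inter> ?G = {}" using pft by blast
    have "I \<subseteq> ?G" by (blast intro: gen.g1)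
    hence "P \<inter> I = {}" using P(3) by blast
    moreover have "Wset (Suc N) \<subseteq> ?G" by (blast intro: gen.g2)
    hence "P \<inter> Wset (Suc N) = {}" using P(3) by blast
    hence "hl {P. pf P} P N" using hl_char[OF P(1)] by blast
    ultimately show "\<exists>P. pf P \<and> P \<inter> I = {} \<and> z \<in> P \<and> (\<exists>n. hl {P. pf P} P n)" using P by blast
  qed
qed

theorem proposition4p4:
  fixes I :: "'a::coheyting set"
  assumes "codim_Hausdorff (full_cha :: 'a cha)"
    and "cha_ideal I"
  shows "(codim_Hausdorff (quot_cha I) \<longleftrightarrow> codim_closed (full_cha :: 'a cha) I)
         \<and> (\<forall>a::'a. codim_Hausdorff (quot_cha {x. x \<le> a}))"
proof
  show "codim_Hausdorff (quot_cha I) \<longleftrightarrow> codim_closed (full_cha :: 'a cha) I"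
    by (rule main_equiv[OF assms(2)])
  show "\<forall>a::'a. codim_Hausdorff (quot_cha {x. x \<le> a})"
  proof
    fix a :: 'a
    have Ia: "cha_ideal {x. x \<le> a}" by (auto simp: cha_ideal_def)
    have H: "\<forall>u v::'a. u \<noteq> v \<longrightarrow> codim (full_cha :: 'a cha) (symdiff u v) \<noteq> \<infinity>"
      using assms(1) haus_full by blast
    have "codim_closed (full_cha :: 'a cha) {x. x \<le> a}"
      unfolding closed_iff
    proof (intro allI impI)
      fix y assume "y \<notin> {x. x \<le> a}"
      hence "y - a \<noteq> bot" by (metis diff_le_iff sup_bot_right order_refl mem_Collect_eq)
      hence "codim (full_cha :: 'a cha) (symdiff (y - a) bot) \<noteq> \<infinity>" using H by blast
      then obtain N where "codim (full_cha :: 'a cha) (y - a) \<le> enat N"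
        by (cases "codim (full_cha :: 'a cha) (y - a)") auto
      then obtain P where P: "pf P" "y - a \<in> P" "hl {P. pf P} P N" by (auto simp: codim_full_le)
      show "\<exists>N. \<forall>b\<in>{x. x \<le> a}. codim (full_cha :: 'a cha) (symdiff y b) \<le> enat N"
      proof (intro exI ballI)
        fix b assume "b \<in> {x. x \<le> a}"
        hence "y - a \<le> symdiff y b"
          using diff_anti2[of b a y] by (auto simp: symdiff_def intro: le_supI1)
        hence "symdiff y b \<in> P" using pf_up[OF P(1) P(2)] by blast
        thus "codim (full_cha :: 'a cha) (symdiff y b) \<le> enat N" using P by (auto simp: codim_full_le)
      qed
    qed
    thus "codim_Hausdorff (quot_cha {x. x \<le> a})" using main_equiv[OF Ia] by blast
  qed
qed


end
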